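(* Let $k$ be a field and $K$ a field extension of $k$, with algebraic closure $\overline K$. Let $G(x)\in K[x]$ be a polynomial having a non-zero root in $\overline K$ which is algebraic over $k$. Then there exist a polynomial $g(x)\in k[x]$ with $g(0)\neq0$, a polynomial $H(x)\in K[x]$, and a non-zero polynomial $I(x)\in K[x]$ with $\deg(I)<\deg(G)$, all of whose roots in $\overline K$ are zero or transcendental over $k$, such that $I(x)g(x)=H(x)G(x)$ in $K[x]$. *)

theory Defs
  imports "HOL-Computational_Algebra.Polynomial" "HOL-Algebra.Algebraic_Closure_Type"
begin

definition is_subfield :: "'a::field set \<Rightarrow> bool" where
  "is_subfield k \<longleftrightarrow> 0 \<in> k \<and> 1 \<in> k \<and>
     (\<forall>x\<in>k. \<forall>y\<in>k. x + y \<in> k \<and> x * y \<in> k) \<and>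
     (\<forall>x\<in>k. - x \<in> k \<and> inverse x \<in> k)"

definition poly_over :: "'a::field set \<Rightarrow> 'a poly \<Rightarrow> bool" where
  "poly_over k p \<longleftrightarrow> (\<forall>i. coeff p i \<in> k)"

definition algebraic_over :: "'a::field set \<Rightarrow> 'a alg_closure \<Rightarrow> bool" where
  "algebraic_over k z \<longleftrightarrow>
     (\<exists>p::'a poly. p \<noteq> 0 \<and> poly_over k p \<and> poly (map_poly to_ac p) z = 0)"

end

theory Submission
  imports Defs
begin

lemma map_to_ac_add: "map_poly to_ac (p + q) = map_poly to_ac p + map_poly to_ac q"
  by (rule poly_eqI) (simp add: coeff_map_poly)

lemma map_to_ac_mult: "map_poly to_ac (p * q) = map_poly to_ac p * map_poly to_ac q"
proof (induction p)
  case 0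
  then show ?case by simp
next
  case (pCons a p)
  have "map_poly to_ac (pCons a p * q) = map_poly to_ac (smult a q + pCons 0 (p * q))"
    by simp
  also have "\<dots> = smult (to_ac a) (map_poly to_ac q) + pCons 0 (map_poly to_ac p * map_poly to_ac q)"
    by (simp add: map_to_ac_add map_poly_smult map_poly_pCons pCons.IH)
  also have "\<dots> = map_poly to_ac (pCons a p) * map_poly to_ac q"
    by (simp add: map_poly_pCons)
  finally show ?case .
qed

lemma subfield_sum:
  assumes "is_subfield k" "finite A" "\<And>i. i \<in> A \<Longrightarrow> f i \<in> k"
  shows "sum f A \<in> k"
  using assms(2,3)
proof (induction A rule: finite_induct)
  case empty
  then show ?case using assms(1) by (simp add: is_subfield_def)
next
  case (insert x F)
  then show ?case using assms(1) by (simp add: is_subfield_def)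
qed

lemma poly_over_mult:
  assumes "is_subfield k" "poly_over k p" "poly_over k q"
  shows "poly_over k (p * q)"
  unfolding poly_over_def coeff_mult
proof
  fix n
  show "(\<Sum>i\<le>n. coeff p i * coeff q (n - i)) \<in> k"
    using assms by (intro subfield_sum) (auto simp: poly_over_def is_subfield_def)
qed

lemma strip_x:
  assumes "is_subfield k" "p \<noteq> 0" "poly_over k p" "poly (map_poly to_ac p) z = 0" "z \<noteq> 0"
  shows "\<exists>p0. p0 \<noteq> 0 \<and> poly_over k p0 \<and> poly p0 0 \<noteq> 0 \<and> poly (map_poly to_ac p0) z = 0"
  using assms(2-4)
proof (induction p)
  case 0
  then show ?case by simp
next
  case (pCons a p)
  show ?case
  proof (cases "a = 0")
    case False
    then have "poly (pCons a p) 0 \<noteq> 0" by simp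
    then show ?thesis using pCons.prems by blast
  next
    case True
    have "p \<noteq> 0" using pCons True by auto
    moreover have "poly_over k p" using pCons.prems(2)
      unfolding poly_over_def by (metis coeff_pCons_Suc)
    moreover have "poly (map_poly to_ac p) z = 0"
      using pCons.prems(3) True assms(5) by (simp add: map_poly_pCons)
    ultimately show ?thesis using pCons.IH by blast
  qed
qed

lemma ideal_elem:
  fixes G p :: "'K::field poly"
  assumes "G \<noteq> 0" "poly (map_poly to_ac G) z = 0" "poly (map_poly to_ac p) z = 0"
  shows "\<exists>D. D \<noteq> 0 \<and> D dvd G \<and> D dvd p \<and> poly (map_poly to_ac D) z = 0"
proof -
  define P where "P = (\<lambda>D. D \<noteq> 0 \<and> (\<exists>a b. D = a * G + b * p))"
  have "G = 1 * G + 0 * p" by simp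
  then have "P G" unfolding P_def using assms(1) by blast
  from ex_has_least_nat[of P G degree, OF this] obtain D where
    D: "P D" and min: "\<And>E. P E \<Longrightarrow> degree D \<le> degree E" by blast
  from D obtain a b where ab: "D = a * G + b * p" "D \<noteq> 0" unfolding P_def by blast
  have dv: "D dvd Qx" if Qx: "\<exists>c1 d1. Qx = c1 * G + d1 * p" for Qx
  proof (rule ccontr)
    assume nd: "\<not> D dvd Qx"
    from Qx obtain c1 d1 where cd: "Qx = c1 * G + d1 * p" by blast
    have r0: "Qx mod D \<noteq> 0" using nd by (simp add: dvd_eq_mod_eq_0)
    have "Qx mod D = Qx - (Qx div D) * D" by (metis add_diff_cancel_right' mod_div_mult_eq)
    also have "\<dots> = (c1 - (Qx div D) * a) * G + (d1 - (Qx div D) * b) * p"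
      using cd ab by (simp add: algebra_simps)
    finally have "P (Qx mod D)" using r0 unfolding P_def by blast
    then have "degree D \<le> degree (Qx mod D)" by (rule min)
    moreover have "degree (Qx mod D) < degree D" using degree_mod_less'[OF ab(2) r0] .
    ultimately show False by simp
  qed
  have "D dvd G" by (rule dv) (rule exI[of _ 1], rule exI[of _ 0], simp)
  moreover have "D dvd p" by (rule dv) (rule exI[of _ 0], rule exI[of _ 1], simp)
  moreover have "poly (map_poly to_ac D) z = 0"
    unfolding ab(1) map_to_ac_add map_to_ac_mult using assms by simp
  ultimately show ?thesis using ab(2) by blast
qed

lemma main_aux:
  fixes k :: "'K::field set"
  assumes "is_subfield k"
  shows "G \<noteq> 0 \<Longrightarrow> \<exists>g H I :: 'K poly.
           poly_over k g \<and> poly g 0 \<noteq> 0 \<and>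
           I \<noteq> 0 \<and> degree I \<le> degree G \<and>
           ((\<exists>z::'K alg_closure. z \<noteq> 0 \<and> poly (map_poly to_ac G) z = 0 \<and> algebraic_over k z)
              \<longrightarrow> degree I < degree G) \<and>
           (\<forall>z::'K alg_closure. poly (map_poly to_ac I) z = 0 \<longrightarrow>
                 z = 0 \<or> \<not> algebraic_over k z) \<and>
           I * g = H * G"
proof (induction "degree G" arbitrary: G rule: less_induct)
  case less
  show ?case
  proof (cases "\<exists>z::'K alg_closure. z \<noteq> 0 \<and> poly (map_poly to_ac G) z = 0 \<and> algebraic_over k z")
    case False
    have "poly_over k 1" using assms by (simp add: poly_over_def is_subfield_def coeff_1)
    then show ?thesis using False less.prems
      by (intro exI[of _ 1] exI[of _ G]) auto
  next
    case True
    then obtain z :: "'K alg_closure" where z: "z \<noteq> 0" "poly (map_poly to_ac G) z = 0"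
      and alg: "algebraic_over k z" by blast
    from alg obtain p where p: "p \<noteq> 0" "poly_over k p" "poly (map_poly to_ac p) z = 0"
      unfolding algebraic_over_def by blast
    from strip_x[OF assms p z(1)] obtain p0 where p0: "p0 \<noteq> 0" "poly_over k p0"
      "poly p0 0 \<noteq> 0" "poly (map_poly to_ac p0) z = 0" by blast
    obtain D where D: "D \<noteq> 0" "D dvd G" "D dvd p0" "poly (map_poly to_ac D) z = 0"
      using ideal_elem[OF less.prems z(2) p0(4)] by blast
    have "D \<noteq> 0" using D by simp
    have "poly (map_poly to_ac D) z = 0" using D by simp
    have degD: "degree D > 0"
    proof (rule ccontr)
      assume "\<not> degree D > 0"
      then obtain c where "D = [:c:]" by (metis degree_eq_zeroE neq0_conv)
      then show False using \<open>D \<noteq> 0\<close> \<open>poly (map_poly to_ac D) z = 0\<close> by (simp add: map_poly_pCons)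
    qed
    have "D dvd G" using D by simp
    then obtain G' where G': "G = D * G'" by (elim dvdE)
    have "D dvd p0" using D by simp
    then obtain q where q: "p0 = D * q" by (elim dvdE)
    have "G' \<noteq> 0" using G' less.prems by auto
    have degG': "degree G' < degree G"
      using G' degD \<open>G' \<noteq> 0\<close> \<open>D \<noteq> 0\<close> by (simp add: degree_mult_eq)
    from less.hyps[OF degG' \<open>G' \<noteq> 0\<close>] obtain g H I where
      IH: "poly_over k g" "poly g 0 \<noteq> 0" "I \<noteq> 0" "degree I \<le> degree G'"
      "\<forall>z::'K alg_closure. poly (map_poly to_ac I) z = 0 \<longrightarrow> z = 0 \<or> \<not> algebraic_over k z"
      "I * g = H * G'" by blast
    have "I * (g * p0) = (H * q) * G"
      using IH(6) G' q by (metis mult.assoc mult.commute)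
    moreover have "poly_over k (g * p0)" using poly_over_mult[OF assms IH(1) p0(2)] .
    moreover have "poly (g * p0) 0 \<noteq> 0" using IH(2) p0(3) by simp
    ultimately show ?thesis using IH(3,4,5) degG'
      by (intro exI[of _ "g * p0"] exI[of _ "H * q"] exI[of _ I]) auto
  qed
qed

theorem lemma2p2:
  fixes k :: "'K::field set" and G :: "'K poly"
  assumes "is_subfield k"
    and "G \<noteq> 0"
    and "\<exists>z::'K alg_closure. z \<noteq> 0 \<and> poly (map_poly to_ac G) z = 0 \<and> algebraic_over k z"
  shows "\<exists>g H I :: 'K poly.
           poly_over k g \<and> poly g 0 \<noteq> 0 \<and>
           I \<noteq> 0 \<and> degree I < degree G \<and>
           (\<forall>z::'K alg_closure. poly (map_poly to_ac I) z = 0 \<longrightarrow>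
                 z = 0 \<or> \<not> algebraic_over k z) \<and>
           I * g = H * G"
  using main_aux[OF assms(1) assms(2)] assms(3) by blast

end
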